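(* For $n,i\in\mathbb{N}=\{1,2,\dots\}$ and $\alpha,\beta>-1$, $$\int_{-1}^1|t|^i\,|p_n^{(\alpha,\beta)}(t)|\,dt\le C_{\alpha,\beta}\sqrt{\frac{n}{i^{1+\gamma}}},$$ where $\gamma=\min(\alpha,\beta)$ and $C_{\alpha,\beta}$ is a constant independent of $n$ and $i$.
   Context: The Jacobi polynomials are $P_n^{(\alpha,\beta)}(t)=\sum_{j=0}^n\frac{1}{2^n}\binom{n+\alpha}{n-j}\binom{n+\beta}{j}(t-1)^j(t+1)^{n-j}$. The Jacobi functions on $(-1,1)$ are $p_n^{(\alpha,\beta)}(t)=\frac{(2n+\alpha+\beta+1)\Gamma(n+\alpha+\beta+1)\,n!}{2^{\alpha+\beta+1}\Gamma(n+\alpha+1)\Gamma(n+\beta+1)}(1-t)^{\alpha}(1+t)^{\beta}P_n^{(\alpha,\beta)}(t)$. *)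

theory Defs
  imports "HOL-Analysis.Analysis"
begin

definition jacobiP :: "nat \<Rightarrow> real \<Rightarrow> real \<Rightarrow> real \<Rightarrow> real" where
  "jacobiP n \<alpha> \<beta> t =
     (\<Sum>j\<le>n. (1 / 2 ^ n) * ((real n + \<alpha>) gchoose (n - j)) * ((real n + \<beta>) gchoose j)
              * (t - 1) ^ j * (t + 1) ^ (n - j))"

definition jacobi_fun :: "nat \<Rightarrow> real \<Rightarrow> real \<Rightarrow> real \<Rightarrow> real" where
  "jacobi_fun n \<alpha> \<beta> t =
     ((2 * real n + \<alpha> + \<beta> + 1) * Gamma (real n + \<alpha> + \<beta> + 1) * fact n)
       / (2 powr (\<alpha> + \<beta> + 1) * Gamma (real n + \<alpha> + 1) * Gamma (real n + \<beta> + 1))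
     * (1 - t) powr \<alpha> * (1 + t) powr \<beta> * jacobiP n \<alpha> \<beta> t"

end

theory Submission
  imports Defs "HOL-Computational_Algebra.Formal_Power_Series"
begin


lemma alt_sum_shift:
  fixes f :: "nat \<Rightarrow> real"
  shows "(\<Sum>j\<le>Suc n. (-1)^j * real (Suc n choose j) * f j) =
         (\<Sum>j\<le>n. (-1)^j * real (n choose j) * (f j - f (Suc j)))"
proof -
  define g where "g j = (-1)^j * real (if j = 0 then 0 else n choose (j - 1)) * f j" for j
  have "(\<Sum>j\<le>Suc n. (-1)^j * real (Suc n choose j) * f j) =
        (\<Sum>j\<le>Suc n. (-1)^j * real (n choose j) * f j + g j)"
  proof (rule sum.cong[OF refl])
    fix j assume "j \<in> {..Suc n}"
    show "(-1)^j * real (Suc n choose j) * f j = (-1)^j * real (n choose j) * f j + g j"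
      by (cases j) (simp_all add: g_def algebra_simps)
  qed
  also have "\<dots> = (\<Sum>j\<le>Suc n. (-1)^j * real (n choose j) * f j) + (\<Sum>j\<le>Suc n. g j)"
    by (rule sum.distrib)
  also have "(\<Sum>j\<le>Suc n. (-1)^j * real (n choose j) * f j) = (\<Sum>j\<le>n. (-1)^j * real (n choose j) * f j)"
    by simp
  also have "(\<Sum>j\<le>Suc n. g j) = g 0 + (\<Sum>j\<le>n. g (Suc j))"
    by (rule sum.atMost_Suc_shift)
  also have "(\<Sum>j\<le>n. g (Suc j)) = - (\<Sum>j\<le>n. (-1)^j * real (n choose j) * f (Suc j))"
    by (simp add: g_def sum_negf[symmetric])
  also have "(\<Sum>j\<le>n. (-1)^j * real (n choose j) * (f j - f (Suc j)))
      = (\<Sum>j\<le>n. (-1)^j * real (n choose j) * f j) - (\<Sum>j\<le>n. (-1)^j * real (n choose j) * f (Suc j))"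
    by (simp add: right_diff_distrib sum_subtractf)
  ultimately show ?thesis by (simp add: g_def)
qed

lemma poch_diff:
  fixes x :: real
  shows "pochhammer (x + 1) k - pochhammer x k = real k * pochhammer (x + 1) (k - 1)"
proof (cases k)
  case 0 then show ?thesis by simp
next
  case (Suc m)
  have "pochhammer (x + 1) (Suc m) = pochhammer (x+1) m * (x + 1 + real m)"
    by (simp add: pochhammer_Suc)
  moreover have "pochhammer x (Suc m) = x * pochhammer (x+1) m"
    by (simp add: pochhammer_rec)
  ultimately show ?thesis using Suc by (simp add: algebra_simps)
qed


lemma D_identity:
  "k \<le> n \<Longrightarrow> (\<Sum>j\<le>n. (-1)^j * real (n choose j) * (pochhammer (a + real j) k * pochhammer (b - real j) (n - k)))
      = (-1)^k * fact n"
proof (induction n arbitrary: a b k)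
  case 0 then show ?case by simp
next
  case (Suc n)
  define P where "P a b k j = pochhammer (a + real j) k * pochhammer (b - real j) (n - k)" for a b k j
  let ?g = "\<lambda>j. pochhammer (a + real j) k * pochhammer (b - real j) (Suc n - k)"
  have step: "?g j - ?g (Suc j) = real (Suc n - k) * P a b k j - real k * P (a + 1) (b - 1) (k - 1) j" for j
  proof -
    have e1: "pochhammer (b - real j) (Suc n - k) - pochhammer (b - 1 - real j) (Suc n - k)
        = real (Suc n - k) * pochhammer (b - real j) (n - k)"
    proof -
      have "Suc n - k - 1 = n - k" by simp
      moreover have "b - 1 - real j + 1 = b - real j" by simp
      ultimately show ?thesis using poch_diff[of "b - 1 - real j" "Suc n - k"] by simp
    qed
    have e2: "pochhammer (a + 1 + real j) k - pochhammer (a + real j) k = real k * pochhammer (a + 1 + real j) (k - 1)"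
      using poch_diff[of "a + real j" k] by (simp add: add_ac)
    have e3: "k * pochhammer (b - 1 - real j) (Suc n - k) = k * pochhammer (b - 1 - real j) (n - (k - 1))"
      using Suc.prems by (cases k) auto
    have ag: "a + real (Suc j) = a + 1 + real j" "b - real (Suc j) = b - 1 - real j" by simp_all
    have "?g j - ?g (Suc j) = pochhammer (a + real j) k * (pochhammer (b - real j) (Suc n - k) - pochhammer (b - 1 - real j) (Suc n - k))
        - pochhammer (b - 1 - real j) (Suc n - k) * (pochhammer (a + 1 + real j) k - pochhammer (a + real j) k)"
      unfolding ag by (simp add: algebra_simps)
    also have "\<dots> = real (Suc n - k) * (pochhammer (a + real j) k * pochhammer (b - real j) (n - k))
        - real k * (pochhammer (a + 1 + real j) (k - 1) * pochhammer (b - 1 - real j) (Suc n - k))"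
      unfolding e1 e2 by (simp add: algebra_simps)
    also have "real k * (pochhammer (a + 1 + real j) (k - 1) * pochhammer (b - 1 - real j) (Suc n - k))
       = real k * (pochhammer (a + 1 + real j) (k - 1) * pochhammer (b - 1 - real j) (n - (k - 1)))"
      using e3 by (cases "k = 0") auto
    finally show ?thesis by (simp add: P_def add_ac)
  qed
  have "(\<Sum>j\<le>Suc n. (-1)^j * real (Suc n choose j) * ?g j) = (\<Sum>j\<le>n. (-1)^j * real (n choose j) * (?g j - ?g (Suc j)))"
    by (rule alt_sum_shift)
  also have "\<dots> = (\<Sum>j\<le>n. real (Suc n - k) * ((-1)^j * real (n choose j) * P a b k j) - real k * ((-1)^j * real (n choose j) * P (a + 1) (b - 1) (k - 1) j))"
    by (rule sum.cong[OF refl]) (simp only: step right_diff_distrib mult_ac)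
  also have "\<dots> = real (Suc n - k) * (\<Sum>j\<le>n. (-1)^j * real (n choose j) * P a b k j)
      - real k * (\<Sum>j\<le>n. (-1)^j * real (n choose j) * P (a + 1) (b - 1) (k - 1) j)"
    by (simp only: sum_subtractf sum_distrib_left)
  also have "\<dots> = (-1)^k * fact (Suc n)"
  proof (cases "k = Suc n")
    case True
    then have "k - 1 \<le> n" by simp
    from Suc.IH[OF this, of "a + 1" "b - 1"] True show ?thesis
      by (simp add: P_def)
  next
    case False
    with Suc.prems have kn: "k \<le> n" by simp
    note h1 = Suc.IH[OF kn, of a b, folded P_def]
    show ?thesis
    proof (cases k)
      case 0 then show ?thesis using h1 by (simp add: algebra_simps)
    next
      case (Suc k')
      have "k - 1 \<le> n" using kn by simp
      note h2 = Suc.IH[OF this, of "a + 1" "b - 1", folded P_def]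
      have "real (Suc n - k) = real n + 1 - real k" using kn by (simp add: of_nat_diff)
      then show ?thesis unfolding h1 h2 using Suc kn
        by (simp add: algebra_simps)
    qed
  qed
  finally show ?case .
qed


lemma Gpos: "x > 0 \<Longrightarrow> Gamma (x::real) \<noteq> 0" by (drule Gamma_real_pos) simp

lemma nonpos_pos: "(x::real) > 0 \<Longrightarrow> x \<notin> \<int>\<^sub>\<le>\<^sub>0" by (auto elim!: nonpos_Ints_cases)

lemma Sk_term:
  fixes \<alpha> \<beta> :: real
  assumes "\<alpha> > -1" "\<beta> > -1" "j \<le> n" "k \<le> n"
  shows "(-1)^j * (((real n + \<alpha>) gchoose (n - j)) * ((real n + \<beta>) gchoose j))
           * Beta (\<alpha> + real j + real k + 1) (\<beta> + real (n - j) + real (n - k) + 1)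
         = Gamma (real n + \<alpha> + 1) * Gamma (real n + \<beta> + 1) / (Gamma (2 * real n + \<alpha> + \<beta> + 2) * fact n)
           * ((-1)^j * real (n choose j) * (pochhammer ((\<alpha> + 1) + real j) k * pochhammer ((\<beta> + real n + 1) - real j) (n - k)))"
proof -
  have g1: "((real n + \<alpha>) gchoose (n - j)) = Gamma (real n + \<alpha> + 1) / (fact (n - j) * Gamma (\<alpha> + real j + 1))"
    using gbinomial_Gamma[of "real n + \<alpha>" "n - j"] nonpos_pos[of "real n + \<alpha> + 1"] assms
    by (simp add: of_nat_diff algebra_simps)
  have g2: "((real n + \<beta>) gchoose j) = Gamma (real n + \<beta> + 1) / (fact j * Gamma (\<beta> + real (n - j) + 1))"
    using gbinomial_Gamma[of "real n + \<beta>" "j"] nonpos_pos[of "real n + \<beta> + 1"] assms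
    by (simp add: of_nat_diff algebra_simps)
  have p1: "pochhammer ((\<alpha> + 1) + real j) k = Gamma (\<alpha> + real j + real k + 1) / Gamma (\<alpha> + real j + 1)"
    using pochhammer_Gamma[OF nonpos_pos[of "\<alpha> + 1 + real j"]] assms by (simp add: algebra_simps)
  have p2: "pochhammer ((\<beta> + real n + 1) - real j) (n - k) = Gamma (\<beta> + real (n - j) + real (n - k) + 1) / Gamma (\<beta> + real (n - j) + 1)"
    using pochhammer_Gamma[OF nonpos_pos[of "\<beta> + real (n - j) + 1"], of "n - k"] assms by (simp add: of_nat_diff algebra_simps)
  have bf: "real (n choose j) = fact n / (fact j * fact (n - j))" using binomial_fact[OF assms(3)] by simp
  have bt: "Beta (\<alpha> + real j + real k + 1) (\<beta> + real (n - j) + real (n - k) + 1)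
      = Gamma (\<alpha> + real j + real k + 1) * Gamma (\<beta> + real (n - j) + real (n - k) + 1) / Gamma (2 * real n + \<alpha> + \<beta> + 2)"
    unfolding Beta_def using assms by (simp add: of_nat_diff algebra_simps)
  have nz: "Gamma (\<alpha> + real j + 1) \<noteq> 0" "Gamma (\<beta> + real (n - j) + 1) \<noteq> 0" "Gamma (2 * real n + \<alpha> + \<beta> + 2) \<noteq> 0"
    using assms by (auto intro!: Gpos)
  show ?thesis unfolding g1 g2 p1 p2 bf bt using nz by (simp add: field_simps)
qed

lemma Sk:
  fixes \<alpha> \<beta> :: real
  assumes "\<alpha> > -1" "\<beta> > -1" "k \<le> n"
  shows "(\<Sum>j\<le>n. (-1)^j * (((real n + \<alpha>) gchoose (n - j)) * ((real n + \<beta>) gchoose j))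
           * Beta (\<alpha> + real j + real k + 1) (\<beta> + real (n - j) + real (n - k) + 1))
         = (-1)^k * (Gamma (real n + \<alpha> + 1) * Gamma (real n + \<beta> + 1) / Gamma (2 * real n + \<alpha> + \<beta> + 2))"
proof -
  have "(\<Sum>j\<le>n. (-1)^j * (((real n + \<alpha>) gchoose (n - j)) * ((real n + \<beta>) gchoose j))
           * Beta (\<alpha> + real j + real k + 1) (\<beta> + real (n - j) + real (n - k) + 1))
     = Gamma (real n + \<alpha> + 1) * Gamma (real n + \<beta> + 1) / (Gamma (2 * real n + \<alpha> + \<beta> + 2) * fact n)
       * (\<Sum>j\<le>n. (-1)^j * real (n choose j) * (pochhammer ((\<alpha> + 1) + real j) k * pochhammer ((\<beta> + real n + 1) - real j) (n - k)))"
    unfolding sum_distrib_left by (rule sum.cong[OF refl], rule Sk_term) (use assms in auto)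
  also have "\<dots> = Gamma (real n + \<alpha> + 1) * Gamma (real n + \<beta> + 1) / (Gamma (2 * real n + \<alpha> + \<beta> + 2) * fact n) * ((-1)^k * fact n)"
    by (subst D_identity[OF assms(3)]) simp
  finally show ?thesis by simp
qed


lemma Gamma_ratio_lim:
  fixes z :: real
  assumes "z > 0"
  shows "(\<lambda>m. Gamma (real m + z) / (fact (m - 1) * real m powr z)) \<longlonglongrightarrow> 1"
proof -
  have nz: "z \<notin> \<int>\<^sub>\<le>\<^sub>0" using assms by (auto elim!: nonpos_Ints_cases)
  have G: "Gamma z > 0" using assms by (rule Gamma_real_pos)
  have "(\<lambda>m. Gamma z / Gamma_series' z m) \<longlonglongrightarrow> Gamma z / Gamma z"
    by (intro tendsto_divide tendsto_const Gamma_series'_LIMSEQ) (use G in auto)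
  hence L: "(\<lambda>m. Gamma z / Gamma_series' z m) \<longlonglongrightarrow> 1" using G by simp
  show ?thesis
  proof (rule Lim_transform_eventually[OF L])
    show "\<forall>\<^sub>F m in sequentially. Gamma z / Gamma_series' z m = Gamma (real m + z) / (fact (m - 1) * real m powr z)"
      using eventually_gt_at_top[of "0::nat"]
    proof eventually_elim
      case (elim m)
      have "pochhammer z m = Gamma (z + real m) / Gamma z" using pochhammer_Gamma[OF nz] by simp
      moreover have "exp (z * ln (real m)) = real m powr z" using elim by (simp add: powr_def)
      ultimately show ?case using G unfolding Gamma_series'_def
        by (simp add: field_simps)
    qed
  qed
qed

lemma Gamma_ratio_lim2:
  fixes a b :: real
  assumes "a > 0" "b > 0"
  shows "(\<lambda>m. real m powr (b - a) * Gamma (real m + a) / Gamma (real m + b)) \<longlonglongrightarrow> 1"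
proof -
  have "(\<lambda>m. (Gamma (real m + a) / (fact (m - 1) * real m powr a)) / (Gamma (real m + b) / (fact (m - 1) * real m powr b))) \<longlonglongrightarrow> 1 / 1"
    by (intro tendsto_divide Gamma_ratio_lim assms) auto
  hence L: "(\<lambda>m. (Gamma (real m + a) / (fact (m - 1) * real m powr a)) / (Gamma (real m + b) / (fact (m - 1) * real m powr b))) \<longlonglongrightarrow> 1" by simp
  show ?thesis
  proof (rule Lim_transform_eventually[OF L])
    show "\<forall>\<^sub>F m in sequentially. (Gamma (real m + a) / (fact (m - 1) * real m powr a)) / (Gamma (real m + b) / (fact (m - 1) * real m powr b)) = real m powr (b - a) * Gamma (real m + a) / Gamma (real m + b)"
      using eventually_gt_at_top[of "0::nat"]
    proof eventually_elim
      case (elim m)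
      have "Gamma (real m + b) > 0" using assms by (intro Gamma_real_pos) auto
      moreover have "real m powr (b - a) = real m powr b / real m powr a" using elim by (simp add: powr_diff)
      ultimately show ?case using elim by (simp add: field_simps)
    qed
  qed
qed

lemma lim_bounded:
  fixes f :: "nat \<Rightarrow> real"
  assumes "f \<longlonglongrightarrow> l"
  shows "\<exists>B>0. \<forall>m. \<bar>f m\<bar> \<le> B"
proof -
  have "Bseq f" using assms by (rule convergent_imp_Bseq[OF convergentI])
  then show ?thesis by (auto simp: Bseq_def)
qed


lemma beta_pm1:
  fixes p q :: real
  assumes "p > -1" "q > -1"
  shows "((\<lambda>t. (1 - t) powr p * (1 + t) powr q) has_integral (2 powr (p + q + 1) * Beta (p + 1) (q + 1))) {-1<..<1}"
proof -
  have "((\<lambda>x. x powr (q + 1 - 1) * (1 - x) powr (p + 1 - 1)) has_integral Beta (q + 1) (p + 1)) (cbox 0 1)"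
    using has_integral_Beta_real[of "q+1" "p+1"] assms by simp
  from has_integral_affinity'[OF this, of "1/2" "1/2"]
  have "((\<lambda>x. ((1/2) * x + 1/2) powr q * (1 - ((1/2) * x + 1/2)) powr p) has_integral 2 * Beta (q + 1) (p + 1)) {-1..1}"
    by simp
  hence "((\<lambda>x. ((1/2) * x + 1/2) powr q * (1 - ((1/2) * x + 1/2)) powr p) has_integral 2 * Beta (q + 1) (p + 1)) {-1<..<1}"
    by (simp add: has_integral_Icc_iff_Ioo)
  from has_integral_mult_right[OF this, of "2 powr (p + q)"]
  have *: "((\<lambda>x. 2 powr (p + q) * (((1/2) * x + 1/2) powr q * (1 - ((1/2) * x + 1/2)) powr p)) has_integral 2 powr (p + q) * (2 * Beta (q + 1) (p + 1))) {-1<..<1}" .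
  have e: "2 powr (p + q) * (((1/2) * x + 1/2) powr q * (1 - ((1/2) * x + 1/2)) powr p) = (1 - x) powr p * (1 + x) powr q"
    if "x \<in> {-1<..<1}" for x
  proof -
    have a: "((1/2) * x + 1/2) powr q = (1 + x) powr q / 2 powr q"
      using that powr_divide[of "1+x" 2 q] by (simp add: add_divide_distrib[symmetric] field_simps)
    have b: "(1 - ((1/2) * x + 1/2)) powr p = (1 - x) powr p / 2 powr p"
      using that powr_divide[of "1-x" 2 p] by (simp add: diff_divide_distrib[symmetric] field_simps)
    have c: "2 powr (p + q) = 2 powr p * 2 powr q" by (simp add: powr_add)
    show ?thesis unfolding a b c by simp
  qed
  have "2 powr (p + q) * (2 * Beta (q + 1) (p + 1)) = 2 powr (p + q + 1) * Beta (p + 1) (q + 1)"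
    by (simp add: powr_add Beta_commute)
  with has_integral_eq[OF e *] show ?thesis by simp
qed


definition Acoef :: "nat \<Rightarrow> real \<Rightarrow> real \<Rightarrow> nat \<Rightarrow> real" where
  "Acoef n \<alpha> \<beta> j = ((real n + \<alpha>) gchoose (n - j)) * ((real n + \<beta>) gchoose j)"

lemma sum_Acoef:
  "(\<Sum>k\<le>n. Acoef n \<alpha> \<beta> k) = (2 * real n + \<alpha> + \<beta>) gchoose n"
proof -
  have "(\<Sum>k\<le>n. Acoef n \<alpha> \<beta> k) = (\<Sum>k\<in>{0..n}. ((real n + \<beta>) gchoose k) * ((real n + \<alpha>) gchoose (n - k)))"
    by (simp add: Acoef_def atLeast0AtMost mult.commute)
  also have "\<dots> = ((real n + \<beta>) + (real n + \<alpha>)) gchoose n" by (rule gbinomial_Vandermonde)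
  finally show ?thesis by (simp add: algebra_simps)
qed

lemma WP_expand:
  fixes \<alpha> \<beta> t :: real
  assumes "t \<in> {-1<..<1}"
  shows "(1 - t) powr \<alpha> * (1 + t) powr \<beta> * (jacobiP n \<alpha> \<beta> t)^2 =
    (\<Sum>k\<le>n. \<Sum>j\<le>n. ((1/2^n)^2 * Acoef n \<alpha> \<beta> j * Acoef n \<alpha> \<beta> k * (-1)^(j+k)) *
        ((1 - t) powr (\<alpha> + real j + real k) * (1 + t) powr (\<beta> + real (n - j) + real (n - k))))"
proof -
  from assms have t1: "1 - t > 0" and t2: "1 + t > 0" by auto
  have P: "jacobiP n \<alpha> \<beta> t = (\<Sum>j\<le>n. (1/2^n) * Acoef n \<alpha> \<beta> j * (-1)^j * (1 - t)^j * (1 + t)^(n - j))"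
    unfolding jacobiP_def Acoef_def
  proof (rule sum.cong[OF refl])
    fix j
    have "(t - 1)^j = (-1)^j * (1 - t)^j" by (simp add: power_mult_distrib[symmetric])
    then show "1 / 2 ^ n * ((real n + \<alpha>) gchoose (n - j)) * ((real n + \<beta>) gchoose j) * (t - 1) ^ j * (t + 1) ^ (n - j) =
         1 / 2 ^ n * (((real n + \<alpha>) gchoose (n - j)) * ((real n + \<beta>) gchoose j)) * (- 1) ^ j * (1 - t) ^ j * (1 + t) ^ (n - j)"
      by (simp add: add.commute)
  qed
  have pw: "(1 - t) powr \<alpha> * (1 + t) powr \<beta> * ((1 - t)^j * (1 + t)^(n - j)) * ((1 - t)^k * (1 + t)^(n - k))
      = (1 - t) powr (\<alpha> + real j + real k) * (1 + t) powr (\<beta> + real (n - j) + real (n - k))" for j k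
    using t1 t2 by (simp add: powr_add powr_realpow)
  have "(jacobiP n \<alpha> \<beta> t)^2 = (\<Sum>k\<le>n. \<Sum>j\<le>n. ((1/2^n) * Acoef n \<alpha> \<beta> j * (-1)^j * (1 - t)^j * (1 + t)^(n - j))
            * ((1/2^n) * Acoef n \<alpha> \<beta> k * (-1)^k * (1 - t)^k * (1 + t)^(n - k)))"
    unfolding P power2_eq_square sum_product by (rule sum.swap)
  then have "(1 - t) powr \<alpha> * (1 + t) powr \<beta> * (jacobiP n \<alpha> \<beta> t)^2 =
     (\<Sum>k\<le>n. \<Sum>j\<le>n. (1 - t) powr \<alpha> * (1 + t) powr \<beta> * (((1/2^n) * Acoef n \<alpha> \<beta> j * (-1)^j * (1 - t)^j * (1 + t)^(n - j))
            * ((1/2^n) * Acoef n \<alpha> \<beta> k * (-1)^k * (1 - t)^k * (1 + t)^(n - k))))"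
    by (simp add: sum_distrib_left)
  also have "\<dots> = (\<Sum>k\<le>n. \<Sum>j\<le>n. ((1/2^n)^2 * Acoef n \<alpha> \<beta> j * Acoef n \<alpha> \<beta> k * (-1)^(j+k)) *
        ((1 - t) powr (\<alpha> + real j + real k) * (1 + t) powr (\<beta> + real (n - j) + real (n - k))))"
  proof (intro sum.cong refl)
    fix j k
    show "(1 - t) powr \<alpha> * (1 + t) powr \<beta> * (((1/2^n) * Acoef n \<alpha> \<beta> j * (-1)^j * (1 - t)^j * (1 + t)^(n - j))
            * ((1/2^n) * Acoef n \<alpha> \<beta> k * (-1)^k * (1 - t)^k * (1 + t)^(n - k))) =
        ((1/2^n)^2 * Acoef n \<alpha> \<beta> j * Acoef n \<alpha> \<beta> k * (-1)^(j+k)) *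
        ((1 - t) powr (\<alpha> + real j + real k) * (1 + t) powr (\<beta> + real (n - j) + real (n - k)))"
      by (simp only: pw[symmetric]) (simp add: power_add power2_eq_square mult_ac)
  qed
  finally show ?thesis .
qed


lemma WP_integral:
  fixes \<alpha> \<beta> :: real
  assumes a: "\<alpha> > -1" and b: "\<beta> > -1"
  shows "((\<lambda>t. (1 - t) powr \<alpha> * (1 + t) powr \<beta> * (jacobiP n \<alpha> \<beta> t)^2) has_integral
     (2 powr (\<alpha> + \<beta> + 1) * (Gamma (real n + \<alpha> + 1) * Gamma (real n + \<beta> + 1) / Gamma (2 * real n + \<alpha> + \<beta> + 2))
        * (\<Sum>k\<le>n. Acoef n \<alpha> \<beta> k))) {-1<..<1}"
proof -
  define c where "c j k = (1/2^n)^2 * Acoef n \<alpha> \<beta> j * Acoef n \<alpha> \<beta> k * (-1)^(j+k)" for j k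
  define p where "p j k = \<alpha> + real j + real k" for j k
  define q where "q j k = \<beta> + real (n - j) + real (n - k)" for j k
  have int: "((\<lambda>t. \<Sum>k\<le>n. \<Sum>j\<le>n. c j k * ((1 - t) powr p j k * (1 + t) powr q j k)) has_integral
       (\<Sum>k\<le>n. \<Sum>j\<le>n. c j k * (2 powr (p j k + q j k + 1) * Beta (p j k + 1) (q j k + 1)))) {-1<..<1}"
    by (intro has_integral_sum finite_atMost has_integral_mult_right beta_pm1)
       (use a b in \<open>auto simp: p_def q_def\<close>)
  have int2: "((\<lambda>t. (1 - t) powr \<alpha> * (1 + t) powr \<beta> * (jacobiP n \<alpha> \<beta> t)^2) has_integral
       (\<Sum>k\<le>n. \<Sum>j\<le>n. c j k * (2 powr (p j k + q j k + 1) * Beta (p j k + 1) (q j k + 1)))) {-1<..<1}"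
    by (rule has_integral_eq[OF _ int]) (simp add: WP_expand c_def p_def q_def)
  define G where "G = Gamma (real n + \<alpha> + 1) * Gamma (real n + \<beta> + 1) / Gamma (2 * real n + \<alpha> + \<beta> + 2)"
  have tm: "c j k * (2 powr (p j k + q j k + 1) * Beta (p j k + 1) (q j k + 1)) =
      2 powr (\<alpha> + \<beta> + 1) * (Acoef n \<alpha> \<beta> k * (-1)^k) *
      ((-1)^j * Acoef n \<alpha> \<beta> j * Beta (\<alpha> + real j + real k + 1) (\<beta> + real (n - j) + real (n - k) + 1))"
    if "j \<le> n" "k \<le> n" for j k
  proof -
    have "p j k + q j k + 1 = (\<alpha> + \<beta> + 1) + real (2 * n)" using that by (simp add: p_def q_def of_nat_diff)
    hence "2 powr (p j k + q j k + 1) = 2 powr (\<alpha> + \<beta> + 1) * 2 ^ (2 * n)"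
      using powr_realpow[of 2 "2*n"] by (simp add: powr_add)
    moreover have "(1/2^n)^2 * (2::real) ^ (2 * n) = 1"
      by (simp add: power_mult[symmetric] power_divide mult.commute)
    ultimately show ?thesis unfolding c_def
      by (simp add: p_def q_def power_add algebra_simps)
  qed
  have "(\<Sum>k\<le>n. \<Sum>j\<le>n. c j k * (2 powr (p j k + q j k + 1) * Beta (p j k + 1) (q j k + 1)))
      = (\<Sum>k\<le>n. 2 powr (\<alpha> + \<beta> + 1) * (Acoef n \<alpha> \<beta> k * (-1)^k) *
          (\<Sum>j\<le>n. (-1)^j * Acoef n \<alpha> \<beta> j * Beta (\<alpha> + real j + real k + 1) (\<beta> + real (n - j) + real (n - k) + 1)))"
    by (simp add: tm sum_distrib_left)
  also have "\<dots> = (\<Sum>k\<le>n. 2 powr (\<alpha> + \<beta> + 1) * (Acoef n \<alpha> \<beta> k * (-1)^k) * ((-1)^k * G))"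
  proof (intro sum.cong refl)
    fix k assume "k \<in> {..n}"
    then show "2 powr (\<alpha> + \<beta> + 1) * (Acoef n \<alpha> \<beta> k * (-1)^k) *
          (\<Sum>j\<le>n. (-1)^j * Acoef n \<alpha> \<beta> j * Beta (\<alpha> + real j + real k + 1) (\<beta> + real (n - j) + real (n - k) + 1))
        = 2 powr (\<alpha> + \<beta> + 1) * (Acoef n \<alpha> \<beta> k * (-1)^k) * ((-1)^k * G)"
      using Sk[OF a b, of k n] by (simp add: Acoef_def G_def mult.assoc)
  qed
  also have "\<dots> = 2 powr (\<alpha> + \<beta> + 1) * G * (\<Sum>k\<le>n. Acoef n \<alpha> \<beta> k)"
  proof -
    have "\<And>k. 2 powr (\<alpha> + \<beta> + 1) * (Acoef n \<alpha> \<beta> k * (-1)^k) * ((-1)^k * G) = 2 powr (\<alpha> + \<beta> + 1) * G * Acoef n \<alpha> \<beta> k"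
      by (simp add: mult_ac power_add[symmetric] power_even_eq)
    then show ?thesis by (simp only: sum_distrib_left)
  qed
  finally show ?thesis using int2 by (simp add: G_def)
qed


definition Kc :: "nat \<Rightarrow> real \<Rightarrow> real \<Rightarrow> real" where
  "Kc n \<alpha> \<beta> = ((2 * real n + \<alpha> + \<beta> + 1) * Gamma (real n + \<alpha> + \<beta> + 1) * fact n)
       / (2 powr (\<alpha> + \<beta> + 1) * Gamma (real n + \<alpha> + 1) * Gamma (real n + \<beta> + 1))"

lemma Kc_pos:
  assumes "\<alpha> > -1" "\<beta> > -1" "n \<ge> 1"
  shows "Kc n \<alpha> \<beta> > 0"
  unfolding Kc_def using assms
  by (intro divide_pos_pos mult_pos_pos Gamma_real_pos) auto

lemma KN:
  fixes \<alpha> \<beta> :: real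
  assumes a: "\<alpha> > -1" and b: "\<beta> > -1" and n: "n \<ge> 1"
  shows "Kc n \<alpha> \<beta> * (2 powr (\<alpha> + \<beta> + 1) * (Gamma (real n + \<alpha> + 1) * Gamma (real n + \<beta> + 1) / Gamma (2 * real n + \<alpha> + \<beta> + 2))
        * (\<Sum>k\<le>n. Acoef n \<alpha> \<beta> k)) = 1"
proof -
  have n1: "real n \<ge> 1" using n by simp
  have gb: "(2 * real n + \<alpha> + \<beta>) gchoose n = Gamma (2 * real n + \<alpha> + \<beta> + 1) / (fact n * Gamma (real n + \<alpha> + \<beta> + 1))"
    using gbinomial_Gamma[of "2 * real n + \<alpha> + \<beta>" n] nonpos_pos[of "2 * real n + \<alpha> + \<beta> + 1"] a b n1
    by (simp add: algebra_simps)
  define s where "s = 2 * real n + \<alpha> + \<beta> + 1"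
  have s0: "s > 0" using a b n1 by (simp add: s_def)
  have gp: "Gamma (2 * real n + \<alpha> + \<beta> + 2) = s * Gamma s"
    using Gamma_plus1[OF nonpos_pos[OF s0]] by (simp add: s_def algebra_simps)
  have gs: "Gamma (2 * real n + \<alpha> + \<beta> + 1) = Gamma s" by (simp add: s_def)
  have nz: "Gamma s \<noteq> 0" "Gamma (real n + \<alpha> + \<beta> + 1) \<noteq> 0"
     "Gamma (real n + \<alpha> + 1) \<noteq> 0" "Gamma (real n + \<beta> + 1) \<noteq> 0" "s \<noteq> 0"
    using a b n1 s0 by (auto intro!: Gpos)
  have K: "Kc n \<alpha> \<beta> = (s * Gamma (real n + \<alpha> + \<beta> + 1) * fact n)
       / (2 powr (\<alpha> + \<beta> + 1) * Gamma (real n + \<alpha> + 1) * Gamma (real n + \<beta> + 1))"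
    unfolding Kc_def s_def ..
  show ?thesis unfolding sum_Acoef gb gp gs K using nz by (simp add: field_simps)
qed

lemma Kc_bound:
  fixes \<alpha> \<beta> :: real
  assumes a: "\<alpha> > -1" and b: "\<beta> > -1"
  shows "\<exists>c>0. \<forall>n\<ge>1. Kc n \<alpha> \<beta> \<le> c * real n"
proof -
  define f where "f m = Gamma (real m + (\<alpha> + \<beta> + 2)) * Gamma (real m + 2) / (Gamma (real m + (\<alpha> + 2)) * Gamma (real m + (\<beta> + 2)))" for m :: nat
  have L1: "(\<lambda>m. real m powr ((\<alpha> + 2) - (\<alpha> + \<beta> + 2)) * Gamma (real m + (\<alpha> + \<beta> + 2)) / Gamma (real m + (\<alpha> + 2))) \<longlonglongrightarrow> 1"
    by (rule Gamma_ratio_lim2) (use a b in auto)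
  have L2: "(\<lambda>m. real m powr ((\<beta> + 2) - 2) * Gamma (real m + 2) / Gamma (real m + (\<beta> + 2))) \<longlonglongrightarrow> 1"
    by (rule Gamma_ratio_lim2) (use a b in auto)
  have "(\<lambda>m. (real m powr ((\<alpha> + 2) - (\<alpha> + \<beta> + 2)) * Gamma (real m + (\<alpha> + \<beta> + 2)) / Gamma (real m + (\<alpha> + 2)))
          * (real m powr ((\<beta> + 2) - 2) * Gamma (real m + 2) / Gamma (real m + (\<beta> + 2)))) \<longlonglongrightarrow> 1 * 1"
    by (intro tendsto_mult L1 L2)
  hence L: "(\<lambda>m. (real m powr ((\<alpha> + 2) - (\<alpha> + \<beta> + 2)) * Gamma (real m + (\<alpha> + \<beta> + 2)) / Gamma (real m + (\<alpha> + 2)))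
          * (real m powr ((\<beta> + 2) - 2) * Gamma (real m + 2) / Gamma (real m + (\<beta> + 2)))) \<longlonglongrightarrow> 1" by simp
  have "f \<longlonglongrightarrow> 1"
  proof (rule Lim_transform_eventually[OF L])
    show "\<forall>\<^sub>F m in sequentially. (real m powr ((\<alpha> + 2) - (\<alpha> + \<beta> + 2)) * Gamma (real m + (\<alpha> + \<beta> + 2)) / Gamma (real m + (\<alpha> + 2)))
          * (real m powr ((\<beta> + 2) - 2) * Gamma (real m + 2) / Gamma (real m + (\<beta> + 2))) = f m"
      using eventually_gt_at_top[of "0::nat"]
    proof eventually_elim
      case (elim m)
      have "real m powr ((\<alpha> + 2) - (\<alpha> + \<beta> + 2)) * real m powr ((\<beta> + 2) - 2) = 1"
        using elim by (simp add: powr_add[symmetric])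
      then show ?case unfolding f_def by (simp add: field_simps)
    qed
  qed
  from lim_bounded[OF this] obtain B where B: "B > 0" "\<And>m. \<bar>f m\<bar> \<le> B" by blast
  define c where "c = (3 + \<bar>\<alpha>\<bar> + \<bar>\<beta>\<bar>) * B / 2 powr (\<alpha> + \<beta> + 1)"
  have "c > 0" unfolding c_def using B by auto
  moreover have "Kc n \<alpha> \<beta> \<le> c * real n" if n: "n \<ge> 1" for n
  proof -
    define m where "m = n - 1"
    have nm: "real n = real m + 1" using n by (simp add: m_def)
    have fa: "fact n = Gamma (real m + 2)"
    proof -
      have "real m + 2 = 1 + real n" using nm by simp
      then show ?thesis unfolding Gamma_fact[of n, symmetric] by (simp only:)
    qed
    have Kf: "Kc n \<alpha> \<beta> = (2 * real n + \<alpha> + \<beta> + 1) / 2 powr (\<alpha> + \<beta> + 1) * f m"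
      unfolding Kc_def f_def fa nm by (simp add: algebra_simps)
    have p: "0 < 2 * real n + \<alpha> + \<beta> + 1" using a b n by simp
    have h1: "\<bar>\<alpha>\<bar> * 1 \<le> \<bar>\<alpha>\<bar> * real n" by (rule mult_left_mono) (use n in auto)
    have h2: "\<bar>\<beta>\<bar> * 1 \<le> \<bar>\<beta>\<bar> * real n" by (rule mult_left_mono) (use n in auto)
    have "2 * real n + \<alpha> + \<beta> + 1 \<le> (3 + \<bar>\<alpha>\<bar> + \<bar>\<beta>\<bar>) * real n"
      using h1 h2 n abs_ge_self[of \<alpha>] abs_ge_self[of \<beta>] by (simp add: algebra_simps)
    hence "(2 * real n + \<alpha> + \<beta> + 1) * \<bar>f m\<bar> \<le> (3 + \<bar>\<alpha>\<bar> + \<bar>\<beta>\<bar>) * real n * B"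
      using B(2)[of m] p by (intro mult_mono) auto
    moreover have "(2 * real n + \<alpha> + \<beta> + 1) * f m \<le> (2 * real n + \<alpha> + \<beta> + 1) * \<bar>f m\<bar>"
      using p by (intro mult_left_mono) auto
    ultimately have "(2 * real n + \<alpha> + \<beta> + 1) * f m \<le> (3 + \<bar>\<alpha>\<bar> + \<bar>\<beta>\<bar>) * real n * B" by linarith
    then have "(2 * real n + \<alpha> + \<beta> + 1) * f m / 2 powr (\<alpha> + \<beta> + 1) \<le> (3 + \<bar>\<alpha>\<bar> + \<bar>\<beta>\<bar>) * real n * B / 2 powr (\<alpha> + \<beta> + 1)"
      by (rule divide_right_mono) simp
    moreover have "Kc n \<alpha> \<beta> = (2 * real n + \<alpha> + \<beta> + 1) * f m / 2 powr (\<alpha> + \<beta> + 1)" unfolding Kf by simp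
    moreover have "c * real n = (3 + \<bar>\<alpha>\<bar> + \<bar>\<beta>\<bar>) * real n * B / 2 powr (\<alpha> + \<beta> + 1)" unfolding c_def by simp
    ultimately show ?thesis by simp
  qed
  ultimately show ?thesis by blast
qed


lemma Beta_bound:
  fixes \<alpha> \<beta> :: real
  assumes a: "\<alpha> > -1" and b: "\<beta> > -1"
  shows "\<exists>c>0. \<forall>i\<ge>1. Beta (\<alpha> + 1) (\<beta> + 2 * real i + 1) \<le> c * real i powr (-(\<alpha> + 1))"
proof -
  have "(\<lambda>m. real m powr ((\<alpha> + \<beta> + 2) - (\<beta> + 1)) * Gamma (real m + (\<beta> + 1)) / Gamma (real m + (\<alpha> + \<beta> + 2))) \<longlonglongrightarrow> 1"
    by (rule Gamma_ratio_lim2) (use a b in auto)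
  from lim_bounded[OF this] obtain B where B: "B > 0"
    "\<And>m. \<bar>real m powr ((\<alpha> + \<beta> + 2) - (\<beta> + 1)) * Gamma (real m + (\<beta> + 1)) / Gamma (real m + (\<alpha> + \<beta> + 2))\<bar> \<le> B" by blast
  define c where "c = Gamma (\<alpha> + 1) * B"
  have G0: "Gamma (\<alpha> + 1) > 0" using a by (intro Gamma_real_pos) auto
  have "c > 0" unfolding c_def using B G0 by simp
  moreover have "Beta (\<alpha> + 1) (\<beta> + 2 * real i + 1) \<le> c * real i powr (-(\<alpha> + 1))" if i: "i \<ge> 1" for i
  proof -
    define m where "m = 2 * i"
    have m: "real m = 2 * real i" "real m > 0" using i by (auto simp: m_def)
    have Gp: "Gamma (real m + (\<beta> + 1)) > 0" "Gamma (real m + (\<alpha> + \<beta> + 2)) > 0"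
      using a b m by (auto intro!: Gamma_real_pos)
    have pp: "real m powr (\<alpha> + 1) > 0" using m by simp
    have e: "(\<alpha> + \<beta> + 2) - (\<beta> + 1) = \<alpha> + 1" by simp
    have h: "real m powr (\<alpha> + 1) * Gamma (real m + (\<beta> + 1)) / Gamma (real m + (\<alpha> + \<beta> + 2)) \<le> B"
      using B(2)[of m] Gp pp unfolding e by simp
    have "Gamma (real m + (\<beta> + 1)) / Gamma (real m + (\<alpha> + \<beta> + 2))
        = (real m powr (\<alpha> + 1) * Gamma (real m + (\<beta> + 1)) / Gamma (real m + (\<alpha> + \<beta> + 2))) / real m powr (\<alpha> + 1)"
      using pp by simp
    also have "\<dots> \<le> B / real m powr (\<alpha> + 1)"
      by (rule divide_right_mono) (use h pp in auto)
    also have "\<dots> = B * real m powr (-(\<alpha> + 1))"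
      by (subst powr_minus) (simp add: divide_inverse)
    finally have r: "Gamma (real m + (\<beta> + 1)) / Gamma (real m + (\<alpha> + \<beta> + 2)) \<le> B * real m powr (-(\<alpha> + 1))" .
    have "real m powr (-(\<alpha> + 1)) \<le> real i powr (-(\<alpha> + 1))"
      using m i a by (intro powr_mono2') auto
    with r B have r2: "Gamma (real m + (\<beta> + 1)) / Gamma (real m + (\<alpha> + \<beta> + 2)) \<le> B * real i powr (-(\<alpha> + 1))"
      by (smt (verit) mult_left_mono)
    have "Beta (\<alpha> + 1) (\<beta> + 2 * real i + 1) = Gamma (\<alpha> + 1) * (Gamma (real m + (\<beta> + 1)) / Gamma (real m + (\<alpha> + \<beta> + 2)))"
      unfolding Beta_def m by (simp add: algebra_simps)
    also have "\<dots> \<le> Gamma (\<alpha> + 1) * (B * real i powr (-(\<alpha> + 1)))"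
      using r2 G0 by (intro mult_left_mono) auto
    finally show ?thesis by (simp add: c_def mult_ac)
  qed
  ultimately show ?thesis by blast
qed

lemma t2i_integral1:
  fixes \<alpha> \<beta> :: real
  assumes a: "\<alpha> > -1" and b: "\<beta> > -1"
  shows "((\<lambda>t. ((1 + t) / 2)^(2*i) * ((1 - t) powr \<alpha> * (1 + t) powr \<beta>)) has_integral
           2 powr (\<alpha> + \<beta> + 1) * Beta (\<alpha> + 1) (\<beta> + 2 * real i + 1)) {-1<..<1}"
proof -
  have "((\<lambda>t. (1 / 2^(2*i)) * ((1 - t) powr \<alpha> * (1 + t) powr (\<beta> + real (2*i)))) has_integral
           (1 / 2^(2*i)) * (2 powr (\<alpha> + (\<beta> + real (2*i)) + 1) * Beta (\<alpha> + 1) (\<beta> + real (2*i) + 1))) {-1<..<1}"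
    by (intro has_integral_mult_right beta_pm1) (use a b in auto)
  moreover note H = this
  have E: "(1 / 2^(2*i)) * (2 powr (\<alpha> + (\<beta> + real (2*i)) + 1) * Beta (\<alpha> + 1) (\<beta> + real (2*i) + 1))
      = 2 powr (\<alpha> + \<beta> + 1) * Beta (\<alpha> + 1) (\<beta> + 2 * real i + 1)"
  proof -
    have "\<alpha> + (\<beta> + real (2*i)) + 1 = (\<alpha> + \<beta> + 1) + real (2*i)" by simp
    hence "2 powr (\<alpha> + (\<beta> + real (2*i)) + 1) = 2 powr (\<alpha> + \<beta> + 1) * 2 powr real (2*i)" by (simp only: powr_add)
    hence "2 powr (\<alpha> + (\<beta> + real (2*i)) + 1) = 2 powr (\<alpha> + \<beta> + 1) * 2^(2*i)" by (simp only: powr_realpow)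
    then show ?thesis by (simp add: algebra_simps)
  qed
  have P: "(1 / 2^(2*i)) * ((1 - t) powr \<alpha> * (1 + t) powr (\<beta> + real (2*i))) =
      ((1 + t) / 2)^(2*i) * ((1 - t) powr \<alpha> * (1 + t) powr \<beta>)" if "t \<in> {-1<..<1}" for t
  proof -
    have X: "(1 + t) powr (\<beta> + real (2*i)) = (1 + t) powr \<beta> * (1 + t)^(2*i)"
    proof -
      have "0 < 1+t" using that by simp
      then have "(1+t) powr real (2*i) = (1+t)^(2*i)" by (rule powr_realpow)
      then show ?thesis unfolding powr_add by (simp only:)
    qed
    show ?thesis unfolding X power_divide by (simp add: field_simps)
  qed
  show ?thesis using has_integral_eq[OF P H] E by simp
qed

lemma t2i_integral2:
  fixes \<alpha> \<beta> :: real
  assumes a: "\<alpha> > -1" and b: "\<beta> > -1"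
  shows "((\<lambda>t. ((1 - t) / 2)^(2*i) * ((1 - t) powr \<alpha> * (1 + t) powr \<beta>)) has_integral
           2 powr (\<alpha> + \<beta> + 1) * Beta (\<beta> + 1) (\<alpha> + 2 * real i + 1)) {-1<..<1}"
proof -
  have "((\<lambda>t. (1 / 2^(2*i)) * ((1 - t) powr (\<alpha> + real (2*i)) * (1 + t) powr \<beta>)) has_integral
           (1 / 2^(2*i)) * (2 powr ((\<alpha> + real (2*i)) + \<beta> + 1) * Beta (\<alpha> + real (2*i) + 1) (\<beta> + 1))) {-1<..<1}"
    by (intro has_integral_mult_right beta_pm1) (use a b in auto)
  moreover note H = this
  have E: "(1 / 2^(2*i)) * (2 powr ((\<alpha> + real (2*i)) + \<beta> + 1) * Beta (\<alpha> + real (2*i) + 1) (\<beta> + 1))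
      = 2 powr (\<alpha> + \<beta> + 1) * Beta (\<beta> + 1) (\<alpha> + 2 * real i + 1)"
  proof -
    have "(\<alpha> + real (2*i)) + \<beta> + 1 = (\<alpha> + \<beta> + 1) + real (2*i)" by simp
    hence "2 powr ((\<alpha> + real (2*i)) + \<beta> + 1) = 2 powr (\<alpha> + \<beta> + 1) * 2 powr real (2*i)" by (simp only: powr_add)
    hence "2 powr ((\<alpha> + real (2*i)) + \<beta> + 1) = 2 powr (\<alpha> + \<beta> + 1) * 2^(2*i)" by (simp only: powr_realpow)
    then show ?thesis by (simp add: algebra_simps Beta_commute)
  qed
  have P: "(1 / 2^(2*i)) * ((1 - t) powr (\<alpha> + real (2*i)) * (1 + t) powr \<beta>) =
      ((1 - t) / 2)^(2*i) * ((1 - t) powr \<alpha> * (1 + t) powr \<beta>)" if "t \<in> {-1<..<1}" for t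
  proof -
    have X: "(1 - t) powr (\<alpha> + real (2*i)) = (1 - t) powr \<alpha> * (1 - t)^(2*i)"
    proof -
      have "0 < 1-t" using that by simp
      then have "(1-t) powr real (2*i) = (1-t)^(2*i)" by (rule powr_realpow)
      then show ?thesis unfolding powr_add by (simp only:)
    qed
    show ?thesis unfolding X power_divide by (simp add: field_simps)
  qed
  show ?thesis using has_integral_eq[OF P H] E by simp
qed


lemma m1: "(\<lambda>t::real. jacobiP n \<alpha> \<beta> t) \<in> borel_measurable borel"
  unfolding jacobiP_def by measurable
lemma m2: "(\<lambda>t::real. ennreal (\<bar>t\<bar>^i * sqrt ((1 - t) powr \<alpha> * (1 + t) powr \<beta>)) * indicator {-1<..<1} t) \<in> borel_measurable lborel"
  by measurable
lemma m3: "(\<lambda>t::real. ennreal (K * sqrt ((1 - t) powr \<alpha> * (1 + t) powr \<beta>) * \<bar>jacobiP n \<alpha> \<beta> t\<bar>) * indicator {-1<..<1} t) \<in> borel_measurable lborel"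
  using m1 by measurable
lemma m4: "(\<lambda>t::real. indicator {-1<..<1} t *\<^sub>R (\<bar>t\<bar>^i * \<bar>jacobi_fun n \<alpha> \<beta> t\<bar>)) \<in> borel_measurable lborel"
  unfolding jacobi_fun_def using m1 by measurable


lemma ennreal_sq_le:
  fixes x :: ennreal
  assumes "x^2 \<le> ennreal y" "y \<ge> 0"
  shows "x \<le> ennreal (sqrt y)"
proof (cases x)
  case (real r)
  then have "ennreal (r^2) \<le> ennreal y" using assms by (simp add: ennreal_power)
  then have "r^2 \<le> y" using assms by (simp add: ennreal_le_iff)
  then have "r \<le> sqrt y" using real by (simp add: real_le_rsqrt)
  then show ?thesis using real by (simp add: ennreal_leI)
next
  case top
  then show ?thesis using assms by (simp add: power2_eq_square top_unique)
qed

lemma main_bound: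
  fixes \<alpha> \<beta> :: real
  assumes a: "\<alpha> > -1" and b: "\<beta> > -1" and n: "n \<ge> 1"
  shows "(LINT t:{-1<..<1}|lborel. \<bar>t\<bar> ^ i * \<bar>jacobi_fun n \<alpha> \<beta> t\<bar>)
     \<le> sqrt (2 powr (\<alpha> + \<beta> + 1) * (Beta (\<alpha> + 1) (\<beta> + 2 * real i + 1) + Beta (\<beta> + 1) (\<alpha> + 2 * real i + 1)) * Kc n \<alpha> \<beta>)"
proof -
  define S :: "real set" where "S = {-1<..<1}"
  define W where "W t = (1 - t) powr \<alpha> * (1 + t) powr \<beta>" for t :: real
  define P where "P t = jacobiP n \<alpha> \<beta> t" for t
  define K where "K = Kc n \<alpha> \<beta>"
  define J where "J = 2 powr (\<alpha> + \<beta> + 1) * (Beta (\<alpha> + 1) (\<beta> + 2 * real i + 1) + Beta (\<beta> + 1) (\<alpha> + 2 * real i + 1))"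
  have K0: "K > 0" unfolding K_def using Kc_pos[OF a b n] .
  have W0: "W t \<ge> 0" for t unfolding W_def by simp
  have jf: "jacobi_fun n \<alpha> \<beta> t = K * W t * P t" for t
    unfolding jacobi_fun_def K_def Kc_def W_def P_def by (simp add: mult_ac)
  define f where "f t = ennreal (\<bar>t\<bar>^i * sqrt (W t)) * indicator S t" for t
  define g where "g t = ennreal (K * sqrt (W t) * \<bar>P t\<bar>) * indicator S t" for t
  have mP: "P \<in> borel_measurable borel" unfolding P_def by (rule m1)
  have mf: "f \<in> borel_measurable lborel" unfolding f_def W_def S_def by measurable
  have mg: "g \<in> borel_measurable lborel" unfolding g_def W_def S_def using mP by measurable
  have fg: "f t * g t = ennreal (indicator S t *\<^sub>R (\<bar>t\<bar>^i * \<bar>jacobi_fun n \<alpha> \<beta> t\<bar>))" for t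
  proof -
    have "\<bar>jacobi_fun n \<alpha> \<beta> t\<bar> = K * W t * \<bar>P t\<bar>" unfolding jf using K0 W0[of t] by (simp add: abs_mult)
    moreover have "sqrt (W t) * sqrt (W t) = W t" using W0[of t] by simp
    ultimately have e1: "(\<bar>t\<bar>^i * sqrt (W t)) * (K * sqrt (W t) * \<bar>P t\<bar>) = \<bar>t\<bar>^i * \<bar>jacobi_fun n \<alpha> \<beta> t\<bar>"
      by (simp add: mult_ac)
    have e2: "ennreal (\<bar>t\<bar>^i * sqrt (W t)) * ennreal (K * sqrt (W t) * \<bar>P t\<bar>)
        = ennreal ((\<bar>t\<bar>^i * sqrt (W t)) * (K * sqrt (W t) * \<bar>P t\<bar>))"
      using K0 W0[of t] by (simp add: ennreal_mult)
    show ?thesis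
    proof (cases "t \<in> S")
      case True
      then have "f t * g t = ennreal (\<bar>t\<bar>^i * sqrt (W t)) * ennreal (K * sqrt (W t) * \<bar>P t\<bar>)"
        by (simp add: f_def g_def)
      also have "\<dots> = ennreal (\<bar>t\<bar>^i * \<bar>jacobi_fun n \<alpha> \<beta> t\<bar>)" unfolding e2 e1 ..
      finally show ?thesis using True by simp
    qed (simp add: f_def g_def)
  qed
  have f2: "f t ^ 2 = ennreal (t^(2*i) * W t) * indicator S t" for t
  proof -
    have e: "(\<bar>t\<bar>^i * sqrt (W t))^2 = t^(2*i) * W t"
      using W0[of t] by (simp add: power_mult_distrib power_mult[symmetric] mult.commute power_even_abs)
    have "ennreal (\<bar>t\<bar>^i * sqrt (W t)) ^ 2 = ennreal ((\<bar>t\<bar>^i * sqrt (W t))^2)"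
      by (rule ennreal_power) (use W0[of t] in simp)
    then show ?thesis unfolding f_def e[symmetric] by (auto simp: indicator_def power_mult_distrib)
  qed
  have g2: "g t ^ 2 = ennreal (K^2 * (W t * (P t)^2)) * indicator S t" for t
  proof -
    have e: "(K * sqrt (W t) * \<bar>P t\<bar>)^2 = K^2 * (W t * (P t)^2)"
      using W0[of t] by (simp add: power_mult_distrib)
    have "ennreal (K * sqrt (W t) * \<bar>P t\<bar>) ^ 2 = ennreal ((K * sqrt (W t) * \<bar>P t\<bar>)^2)"
      by (rule ennreal_power) (use W0[of t] K0 in simp)
    then show ?thesis unfolding g_def e[symmetric] by (auto simp: indicator_def power_mult_distrib)
  qed
  have intWP: "((\<lambda>t. K^2 * (W t * (P t)^2)) has_integral K^2 * (2 powr (\<alpha> + \<beta> + 1) * (Gamma (real n + \<alpha> + 1) * Gamma (real n + \<beta> + 1) / Gamma (2 * real n + \<alpha> + \<beta> + 2))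
        * (\<Sum>k\<le>n. Acoef n \<alpha> \<beta> k))) S"
    unfolding S_def W_def P_def
    by (rule has_integral_mult_right) (use WP_integral[OF a b, of n] in \<open>simp add: mult.assoc\<close>)
  have KNv: "K^2 * (2 powr (\<alpha> + \<beta> + 1) * (Gamma (real n + \<alpha> + 1) * Gamma (real n + \<beta> + 1) / Gamma (2 * real n + \<alpha> + \<beta> + 2))
        * (\<Sum>k\<le>n. Acoef n \<alpha> \<beta> k)) = K"
    using KN[OF a b n] unfolding K_def[symmetric] by (metis mult.assoc mult.right_neutral power2_eq_square)
  have G2: "(\<integral>\<^sup>+t. g t ^ 2 \<partial>lborel) = ennreal K"
    unfolding g2 using nn_integral_has_integral_lebesgue'[OF _ intWP] W0 K0 KNv
    by (simp add: zero_le_mult_iff)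
  have B1: "Beta (\<alpha> + 1) (\<beta> + 2 * real i + 1) \<ge> 0" "Beta (\<beta> + 1) (\<alpha> + 2 * real i + 1) \<ge> 0"
    using a b by (auto simp: Beta_def intro!: divide_nonneg_nonneg mult_nonneg_nonneg less_imp_le[OF Gamma_real_pos])
  have J0: "J \<ge> 0" unfolding J_def using B1 by simp
  have F2: "(\<integral>\<^sup>+t. f t ^ 2 \<partial>lborel) \<le> ennreal J"
  proof -
    have le: "f t ^ 2 \<le> ennreal (((1 + t) / 2)^(2*i) * W t) * indicator S t + ennreal (((1 - t) / 2)^(2*i) * W t) * indicator S t" for t
    proof (cases "t \<in> S")
      case True
      have "t^(2*i) \<le> ((1 + t) / 2)^(2*i) + ((1 - t) / 2)^(2*i)"
      proof (cases "t \<ge> 0")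
        case True
        have "t^(2*i) \<le> ((1 + t) / 2)^(2*i)" using True \<open>t \<in> S\<close> by (intro power_mono) (auto simp: S_def)
        moreover have "((1 - t) / 2)^(2*i) \<ge> 0" by (simp add: power_mult)
        ultimately show ?thesis by linarith
      next
        case False
        have "(-t)^(2*i) \<le> ((1 - t) / 2)^(2*i)" using False \<open>t \<in> S\<close> by (intro power_mono) (auto simp: S_def)
        moreover have "(-t)^(2*i) = t^(2*i)" by (simp add: power_mult)
        moreover have "((1 + t) / 2)^(2*i) \<ge> 0" by (simp add: power_mult)
        ultimately show ?thesis by linarith
      qed
      hence "t^(2*i) * W t \<le> ((1 + t) / 2)^(2*i) * W t + ((1 - t) / 2)^(2*i) * W t"
        using W0[of t] by (simp add: distrib_right[symmetric] mult_right_mono)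
      hence "ennreal (t^(2*i) * W t) \<le> ennreal (((1 + t) / 2)^(2*i) * W t + ((1 - t) / 2)^(2*i) * W t)"
        by (rule ennreal_leI)
      also have "\<dots> = ennreal (((1 + t) / 2)^(2*i) * W t) + ennreal (((1 - t) / 2)^(2*i) * W t)"
        using True W0[of t] by (intro ennreal_plus) (auto simp: S_def)
      finally show ?thesis unfolding f2 using True by simp
    qed (simp add: f2)
    have m1': "(\<lambda>t. ennreal (((1 + t) / 2)^(2*i) * W t) * indicator S t) \<in> borel_measurable lborel"
      unfolding W_def S_def by measurable
    have m2': "(\<lambda>t. ennreal (((1 - t) / 2)^(2*i) * W t) * indicator S t) \<in> borel_measurable lborel"
      unfolding W_def S_def by measurable
    have I1: "(\<integral>\<^sup>+t. ennreal (((1 + t) / 2)^(2*i) * W t) * indicator S t \<partial>lborel) = ennreal (2 powr (\<alpha> + \<beta> + 1) * Beta (\<alpha> + 1) (\<beta> + 2 * real i + 1))"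
      using nn_integral_has_integral_lebesgue'[OF _ t2i_integral1[OF a b, of i]] W0
      unfolding S_def W_def by (simp add: S_def)
    have I2: "(\<integral>\<^sup>+t. ennreal (((1 - t) / 2)^(2*i) * W t) * indicator S t \<partial>lborel) = ennreal (2 powr (\<alpha> + \<beta> + 1) * Beta (\<beta> + 1) (\<alpha> + 2 * real i + 1))"
      using nn_integral_has_integral_lebesgue'[OF _ t2i_integral2[OF a b, of i]] W0
      unfolding S_def W_def by (simp add: S_def)
    have "(\<integral>\<^sup>+t. f t ^ 2 \<partial>lborel) \<le> (\<integral>\<^sup>+t. ennreal (((1 + t) / 2)^(2*i) * W t) * indicator S t + ennreal (((1 - t) / 2)^(2*i) * W t) * indicator S t \<partial>lborel)"
      by (rule nn_integral_mono) (rule le)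
    also have "\<dots> = ennreal (2 powr (\<alpha> + \<beta> + 1) * Beta (\<alpha> + 1) (\<beta> + 2 * real i + 1)) + ennreal (2 powr (\<alpha> + \<beta> + 1) * Beta (\<beta> + 1) (\<alpha> + 2 * real i + 1))"
      by (subst nn_integral_add) (use m1' m2' I1 I2 in auto)
    also have "\<dots> = ennreal J"
      unfolding J_def using B1 by (subst ennreal_plus[symmetric]) (auto simp: distrib_left)
    finally show ?thesis .
  qed
  have CS: "(\<integral>\<^sup>+t. f t * g t \<partial>lborel)^2 \<le> (\<integral>\<^sup>+t. f t ^ 2 \<partial>lborel) * (\<integral>\<^sup>+t. g t ^ 2 \<partial>lborel)"
    by (rule Cauchy_Schwarz_nn_integral[OF mf mg])
  also have "\<dots> \<le> ennreal J * ennreal K" unfolding G2 by (rule mult_right_mono[OF F2]) simp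
  also have "\<dots> = ennreal (J * K)" using K0 J0 by (simp add: ennreal_mult)
  finally have NN: "(\<integral>\<^sup>+t. f t * g t \<partial>lborel) \<le> ennreal (sqrt (J * K))"
    by (rule ennreal_sq_le) (use J0 K0 in simp)
  have m4': "(\<lambda>t::real. indicator S t *\<^sub>R (\<bar>t\<bar>^i * \<bar>jacobi_fun n \<alpha> \<beta> t\<bar>)) \<in> borel_measurable lborel"
    unfolding S_def by (rule m4)
  have "(LINT t:{-1<..<1}|lborel. \<bar>t\<bar> ^ i * \<bar>jacobi_fun n \<alpha> \<beta> t\<bar>)
      = enn2real (\<integral>\<^sup>+t. ennreal (indicator S t *\<^sub>R (\<bar>t\<bar>^i * \<bar>jacobi_fun n \<alpha> \<beta> t\<bar>)) \<partial>lborel)"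
    unfolding set_lebesgue_integral_def S_def[symmetric]
    by (rule integral_eq_nn_integral[OF m4']) (auto simp: indicator_def)
  also have "\<dots> = enn2real (\<integral>\<^sup>+t. f t * g t \<partial>lborel)" unfolding fg ..
  also have "\<dots> \<le> sqrt (J * K)"
    by (rule enn2real_leI[OF _ NN]) (use J0 K0 in simp)
  finally show ?thesis unfolding J_def K_def .
qed


theorem proposition4p2:
  fixes \<alpha> \<beta> :: real
  assumes "\<alpha> > -1" and "\<beta> > -1"
  shows "\<exists>C. \<forall>n i :: nat. n \<ge> 1 \<longrightarrow> i \<ge> 1 \<longrightarrow>
           (LINT t:{-1<..<1}|lborel. \<bar>t\<bar> ^ i * \<bar>jacobi_fun n \<alpha> \<beta> t\<bar>)
             \<le> C * sqrt (real n / real i powr (1 + min \<alpha> \<beta>))"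
proof -
  note a = assms(1) and b = assms(2)
  obtain c where c: "c > 0" "\<And>n. n \<ge> 1 \<Longrightarrow> Kc n \<alpha> \<beta> \<le> c * real n" using Kc_bound[OF a b] by blast
  obtain c1 where c1: "c1 > 0" "\<And>i. i \<ge> 1 \<Longrightarrow> Beta (\<alpha> + 1) (\<beta> + 2 * real i + 1) \<le> c1 * real i powr (-(\<alpha> + 1))"
    using Beta_bound[OF a b] by blast
  obtain c2 where c2: "c2 > 0" "\<And>i. i \<ge> 1 \<Longrightarrow> Beta (\<beta> + 1) (\<alpha> + 2 * real i + 1) \<le> c2 * real i powr (-(\<beta> + 1))"
    using Beta_bound[OF b a] by blast
  define D where "D = 2 powr (\<alpha> + \<beta> + 1) * (c1 + c2) * c"
  have D0: "D \<ge> 0" unfolding D_def using c c1 c2 by simp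
  show ?thesis
  proof (rule exI[of _ "sqrt D"], intro allI impI)
    fix n i :: nat assume n: "n \<ge> 1" and i: "i \<ge> 1"
    define e where "e = real i powr (-(1 + min \<alpha> \<beta>))"
    have e0: "e \<ge> 0" unfolding e_def by simp
    have ea: "real i powr (-(\<alpha> + 1)) \<le> e" unfolding e_def using i by (intro powr_mono) auto
    have eb: "real i powr (-(\<beta> + 1)) \<le> e" unfolding e_def using i by (intro powr_mono) auto
    define J where "J = 2 powr (\<alpha> + \<beta> + 1) * (Beta (\<alpha> + 1) (\<beta> + 2 * real i + 1) + Beta (\<beta> + 1) (\<alpha> + 2 * real i + 1))"
    have "Beta (\<alpha> + 1) (\<beta> + 2 * real i + 1) + Beta (\<beta> + 1) (\<alpha> + 2 * real i + 1) \<le> c1 * e + c2 * e"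
      using c1(2)[OF i] c2(2)[OF i] mult_left_mono[OF ea, of c1] mult_left_mono[OF eb, of c2] c1(1) c2(1) by linarith
    hence J: "J \<le> 2 powr (\<alpha> + \<beta> + 1) * (c1 + c2) * e" unfolding J_def
      by (simp add: distrib_right mult.assoc)
    have K: "Kc n \<alpha> \<beta> \<le> c * real n" using c(2)[OF n] .
    have K0: "Kc n \<alpha> \<beta> > 0" by (rule Kc_pos[OF a b n])
    have "J * Kc n \<alpha> \<beta> \<le> (2 powr (\<alpha> + \<beta> + 1) * (c1 + c2) * e) * (c * real n)"
      by (rule mult_mono[OF J K]) (use c1 c2 e0 K0 in auto)
    also have "\<dots> = D * (real n / real i powr (1 + min \<alpha> \<beta>))"
    proof -
      have "e = inverse (real i powr (1 + min \<alpha> \<beta>))" unfolding e_def by (rule powr_minus)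
      then show ?thesis unfolding D_def by (simp add: divide_inverse mult_ac)
    qed
    finally have JK: "J * Kc n \<alpha> \<beta> \<le> D * (real n / real i powr (1 + min \<alpha> \<beta>))" .
    have "(LINT t:{-1<..<1}|lborel. \<bar>t\<bar> ^ i * \<bar>jacobi_fun n \<alpha> \<beta> t\<bar>) \<le> sqrt (J * Kc n \<alpha> \<beta>)"
      unfolding J_def by (rule main_bound[OF a b n])
    also have "\<dots> \<le> sqrt (D * (real n / real i powr (1 + min \<alpha> \<beta>)))" using JK by simp
    also have "\<dots> = sqrt D * sqrt (real n / real i powr (1 + min \<alpha> \<beta>))" by (rule real_sqrt_mult)
    finally show "(LINT t:{-1<..<1}|lborel. \<bar>t\<bar> ^ i * \<bar>jacobi_fun n \<alpha> \<beta> t\<bar>) \<le> sqrt D * sqrt (real n / real i powr (1 + min \<alpha> \<beta>))" .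
  qed
qed


end
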